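(* Let $a<b$ and let $X$ be a random variable taking values in $[a,b]$, with probability density function $f:[a,b]\rightarrow[0,1]$ and cumulative distribution function $F(x)=\Pr(X\le x)=\int_a^x f(t)\,dt$. Assume that $F$ is differentiable in $(a,b)$ with $F'=f\in L^1[a,b]$ and that $\gamma\le f(t)\le\Gamma$ for all $t\in[a,b]$, where $\gamma,\Gamma$ are real constants. Then for all $x\in[a,\frac{a+b}{2}]$, \[ \left|\frac{1}{2}[F(x)+F(a+b-x)]-\frac{b-E(X)}{b-a}\right|\leq \left[\frac{b-a}{4}+\left|x-\frac{3a+b}{4}\right|\right] \left(\frac{1}{b-a}-\gamma\right) \] and \[ \left|\frac{1}{2}[F(x)+F(a+b-x)]-\frac{b-E(X)}{b-a}\right|\leq \left[\frac{b-a}{4}+\left|x-\frac{3a+b}{4}\right|\right] \left(\Gamma-\frac{1}{b-a}\right), \] where $E(X)$ is the expectation of $X$. *)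

theory Defs
  imports "HOL-Probability.Probability"
begin

end

theory Submission imports Defs begin

lemma Pbound:
  fixes a b x t :: real
  assumes "a < b" "a \<le> x" "x \<le> (a+b)/2" "a \<le> t" "t \<le> b"
  shows "\<bar>(indicator {a..x} t + indicator {a..a+b-x} t)/2 - (b-t)/(b-a)\<bar>
          \<le> ((b-a)/4 + \<bar>x - (3*a+b)/4\<bar>) / (b-a)"
proof -
  define k1 where "k1 = (b-a)/4"
  define k2 where "k2 = (3*a+b)/4"
  have e1: "4*k1 = b-a" "4*k2 = 3*a+b" unfolding k1_def k2_def by simp_all
  have hx: "2*x \<le> a+b" using assms(3) by simp
  define u where "u = (indicator {a..x} t + indicator {a..a+b-x} t)/(2::real)"
  have A1: "x - k2 \<le> \<bar>x - k2\<bar>" "k2 - x \<le> \<bar>x - k2\<bar>" by linarith+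
  have "\<bar>(b-a)*u - (b-t)\<bar> \<le> k1 + \<bar>x - k2\<bar>"
  proof (cases "t \<le> x")
    case True
    then have "t \<le> a+b-x" using hx by linarith
    then have "u = 1" using True assms unfolding u_def by (simp add: indicator_def)
    then have w: "(b-a)*u = b-a" by simp
    then show ?thesis unfolding abs_le_iff using True assms e1 hx A1 by linarith
  next
    case False
    show ?thesis
    proof (cases "t \<le> a+b-x")
      case True
      then have "u = 1/2" using False assms unfolding u_def by (simp add: indicator_def)
      then have w: "2*((b-a)*u) = b-a" by simp
      then show ?thesis unfolding abs_le_iff using True False assms e1 hx A1 w by linarith
    next
      case F2: False
      then have "u = 0" using False assms unfolding u_def by (simp add: indicator_def)
      then have w: "(b-a)*u = 0" by simp
      then show ?thesis unfolding abs_le_iff using F2 False assms e1 hx A1 by linarith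
    qed
  qed
  note N = this
  have "u - (b-t)/(b-a) = ((b-a)*u - (b-t)) / (b-a)"
    using assms by (simp add: field_simps)
  then have "\<bar>u - (b-t)/(b-a)\<bar> = \<bar>(b-a)*u - (b-t)\<bar> / (b-a)"
    using assms by simp
  also have "\<dots> \<le> (k1 + \<bar>x - k2\<bar>) / (b-a)"
    by (rule divide_right_mono[OF N]) (use assms in simp)
  finally show ?thesis unfolding u_def k1_def k2_def .
qed

lemma lin_int: fixes a b :: real assumes "a \<le> b"
  shows "((\<lambda>t. b - t) has_integral (b-a)^2/2) {a..b}"
proof -
  define G where "G = (\<lambda>t::real. -((b-t)^2)/2)"
  have "((\<lambda>t. b - t) has_integral (G b - G a)) {a..b}"
    unfolding G_def
    apply (rule fundamental_theorem_of_calculus[OF assms])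
    apply (auto intro!: derivative_eq_intros simp: has_real_derivative_iff_has_vector_derivative[symmetric])
    apply (simp add: field_simps)
    done
  then show ?thesis by (simp add: G_def)
qed

theorem theorem4p1:
  fixes M :: "'s measure" and X :: "'s \<Rightarrow> real"
    and f F :: "real \<Rightarrow> real" and a b \<gamma> \<Gamma> x :: real
  assumes "prob_space M"
    and "a < b"
    and X_range: "\<forall>\<omega>\<in>space M. X \<omega> \<in> {a..b}"
    and density: "distributed M lborel X (\<lambda>t. ennreal (indicator {a..b} t * f t))"
    and f_range: "\<forall>t\<in>{a..b}. f t \<in> {0..1}"
    and F_cdf: "\<forall>y. F y = measure M {\<omega> \<in> space M. X \<omega> \<le> y}"
    and F_int: "\<forall>y\<in>{a..b}. F y = integral {a..y} f"
    and F_deriv: "\<forall>t\<in>{a<..<b}. (F has_real_derivative f t) (at t)"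
    and f_L1: "set_integrable lborel {a..b} f"
    and bounds: "\<forall>t\<in>{a..b}. \<gamma> \<le> f t \<and> f t \<le> \<Gamma>"
    and x: "x \<in> {a..(a+b)/2}"
  shows "\<bar>(F x + F (a+b-x))/2 - (b - prob_space.expectation M X)/(b-a)\<bar>
           \<le> ((b-a)/4 + \<bar>x - (3*a+b)/4\<bar>) * (1/(b-a) - \<gamma>)
         \<and> \<bar>(F x + F (a+b-x))/2 - (b - prob_space.expectation M X)/(b-a)\<bar>
           \<le> ((b-a)/4 + \<bar>x - (3*a+b)/4\<bar>) * (\<Gamma> - 1/(b-a))"
proof -
  interpret P: prob_space M by (rule assms(1))
  define S where "S = {a..b}"
  define y where "y = a+b-x"
  define E where "E = P.expectation X"
  define K where "K = (b-a)/4 + \<bar>x - (3*a+b)/4\<bar>"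
  have ab: "a < b" by (rule assms(2))
  have xa: "a \<le> x" and xb: "x \<le> (a+b)/2" using x by auto
  have hx: "2*x \<le> a+b" using xb by simp
  have xS: "x \<in> S" "y \<in> S" using xa hx ab unfolding S_def y_def by auto
  have fint: "f integrable_on S" unfolding S_def by (rule set_borel_integral_eq_integral(1)[OF f_L1])
  have "{\<omega> \<in> space M. X \<omega> \<le> b} = space M" using X_range by auto
  then have "F b = 1" using F_cdf P.prob_space by simp
  then have f1: "(f has_integral 1) S" using F_int fint ab unfolding S_def
    by (metis atLeastAtMost_iff has_integral_integral order_refl less_imp_le)
  have nn: "\<And>t. 0 \<le> indicator {a..b} t * f t" using f_range by (auto simp: indicator_def)
  have Eeq: "(\<integral>t. (indicator {a..b} t * f t) * t \<partial>lborel) = E"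
    unfolding E_def using distributed_integral[OF density, of "\<lambda>t. t"] nn by simp
  have fL: "integrable lborel (\<lambda>t. indicator {a..b} t * f t)"
    using f_L1 unfolding set_integrable_def by simp
  have iB: "integrable lborel (\<lambda>t. (\<bar>a\<bar> + \<bar>b\<bar>) * (indicator {a..b} t * f t))"
      using fL by simp
  have ftL: "set_integrable lborel {a..b} (\<lambda>t. f t * t)"
    unfolding set_integrable_def
  proof (rule Bochner_Integration.integrable_bound[OF iB])
    have "(\<lambda>t. indicator {a..b} t * f t) \<in> borel_measurable lborel"
      using fL by (rule borel_measurable_integrable)
    then have "(\<lambda>t. (indicator {a..b} t * f t) * t) \<in> borel_measurable lborel"
      by measurable
    then show "(\<lambda>t. indicator {a..b} t *\<^sub>R (f t * t)) \<in> borel_measurable lborel"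
      by (simp add: mult.assoc)
    show "AE t in lborel. norm (indicator {a..b} t *\<^sub>R (f t * t))
            \<le> norm ((\<bar>a\<bar> + \<bar>b\<bar>) * (indicator {a..b} t * f t))"
    proof (rule AE_I2)
      fix t
      show "norm (indicator {a..b} t *\<^sub>R (f t * t))
            \<le> norm ((\<bar>a\<bar> + \<bar>b\<bar>) * (indicator {a..b} t * f t))"
      proof (cases "t \<in> {a..b}")
        case True
        then have "\<bar>t\<bar> \<le> \<bar>a\<bar> + \<bar>b\<bar>" by auto
        moreover have "0 \<le> f t" using True f_range by auto
        ultimately have "\<bar>t\<bar> * f t \<le> (\<bar>a\<bar> + \<bar>b\<bar>) * f t" by (rule mult_right_mono)
        then show ?thesis using True \<open>0 \<le> f t\<close> by (simp add: abs_mult mult.commute)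
      qed simp
    qed
  qed
  have ft: "((\<lambda>t. f t * t) has_integral E) S"
  proof -
    have "(LINT t:{a..b}|lborel. f t * t) = integral {a..b} (\<lambda>t. f t * t)"
      by (rule set_borel_integral_eq_integral(2)[OF ftL])
    moreover have "(LINT t:{a..b}|lborel. f t * t) = E"
      unfolding Eeq[symmetric] set_lebesgue_integral_def by (simp add: mult.assoc)
    moreover have "(\<lambda>t. f t * t) integrable_on {a..b}"
      by (rule set_borel_integral_eq_integral(1)[OF ftL])
    ultimately show ?thesis unfolding S_def by (metis has_integral_integral)
  qed
  have subx: "{a..x} \<subseteq> S" "{a..y} \<subseteq> S" using xS unfolding S_def by auto
  have fx: "(f has_integral F x) {a..x}"
    using F_int xS integrable_on_subinterval[OF fint subx(1)] unfolding S_def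
    by (metis has_integral_integral)
  have fy: "(f has_integral F y) {a..y}"
    using F_int xS integrable_on_subinterval[OF fint subx(2)] unfolding S_def
    by (metis has_integral_integral)
  have ya: "a \<le> y" using xS unfolding S_def by auto
  have lin: "((\<lambda>t. b - t) has_integral (b-a)^2/2) S" unfolding S_def using lin_int ab by simp
  define D where "D = (F x + F y)/2 - (b-E)/(b-a)"
  have key: "\<bar>D\<bar> \<le> integral S (\<lambda>t. \<bar>f t - c\<bar>) * (K/(b-a))"
    if ci: "(\<lambda>t. \<bar>f t - c\<bar>) integrable_on S" for c
  proof -
    have j1: "((\<lambda>t. f t - c) has_integral (F x - c*(x-a))) {a..x}"
      using has_integral_diff[OF fx has_integral_const_real[of c a x]] xa by (simp add: mult.commute)
    have i1: "((\<lambda>t. if t \<in> {a..x} then f t - c else 0) has_integral (F x - c*(x-a))) S"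
      by (subst has_integral_restrict[OF subx(1)]) (rule j1)
    have j2: "((\<lambda>t. f t - c) has_integral (F y - c*(y-a))) {a..y}"
      using has_integral_diff[OF fy has_integral_const_real[of c a y]] ya by (simp add: mult.commute)
    have i2: "((\<lambda>t. if t \<in> {a..y} then f t - c else 0) has_integral (F y - c*(y-a))) S"
      by (subst has_integral_restrict[OF subx(2)]) (rule j2)
    have j3: "((\<lambda>t. b * f t - f t * t - c * (b - t)) has_integral (b*1 - E - c*((b-a)^2/2))) S"
      by (intro has_integral_diff has_integral_mult_right f1 ft lin)
    have i3: "((\<lambda>t. (f t - c) * (b - t)) has_integral (b - E - c*((b-a)^2/2))) S"
      using j3 by (simp add: algebra_simps)
    define P where "P t = (indicator {a..x} t + indicator {a..y} t)/2 - (b-t)/(b-a)" for t :: real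
    have j4: "((\<lambda>t. (1/2) * (if t \<in> {a..x} then f t - c else 0)
                 + (1/2) * (if t \<in> {a..y} then f t - c else 0)
                 - (1/(b-a)) * ((f t - c) * (b - t))) has_integral
           ((1/2) * (F x - c*(x-a)) + (1/2) * (F y - c*(y-a)) - (1/(b-a)) * (b - E - c*((b-a)^2/2)))) S"
      by (intro has_integral_diff has_integral_add has_integral_mult_right i1 i2 i3)
    have val: "(1/2) * (F x - c*(x-a)) + (1/2) * (F y - c*(y-a)) - (1/(b-a)) * (b - E - c*((b-a)^2/2)) = D"
      using ab unfolding D_def y_def by (simp add: field_simps power2_eq_square)
    have pw: "(1/2) * (if t \<in> {a..x} then f t - c else 0)
                 + (1/2) * (if t \<in> {a..y} then f t - c else 0)
                 - (1/(b-a)) * ((f t - c) * (b - t)) = (f t - c) * P t" for t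
      unfolding P_def indicator_def using ab
      by (cases "t \<in> {a..x}"; cases "t \<in> {a..y}"; auto simp: field_simps)
    have hG: "((\<lambda>t. (f t - c) * P t) has_integral D) S"
      using j4 unfolding val pw .
    have "norm (integral S (\<lambda>t. (f t - c) * P t)) \<le> integral S (\<lambda>t. \<bar>f t - c\<bar> * (K/(b-a)))"
    proof (rule integral_norm_bound_integral)
      show "(\<lambda>t. (f t - c) * P t) integrable_on S" using hG by blast
      show "(\<lambda>t. \<bar>f t - c\<bar> * (K/(b-a))) integrable_on S" using ci by (rule integrable_on_mult_left)
      fix t assume "t \<in> S"
      then have "\<bar>P t\<bar> \<le> K/(b-a)" unfolding P_def K_def y_def S_def
        using Pbound[OF ab xa xb] by auto
      then have "\<bar>f t - c\<bar> * \<bar>P t\<bar> \<le> \<bar>f t - c\<bar> * (K/(b-a))"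
        by (rule mult_left_mono) simp
      then show "norm ((f t - c) * P t) \<le> \<bar>f t - c\<bar> * (K/(b-a))"
        by (simp only: real_norm_def abs_mult)
    qed
    moreover have "integral S (\<lambda>t. (f t - c) * P t) = D" using hG by (rule integral_unique)
    moreover have "integral S (\<lambda>t. \<bar>f t - c\<bar> * (K/(b-a))) = integral S (\<lambda>t. \<bar>f t - c\<bar>) * (K/(b-a))"
      by (rule integral_unique, rule has_integral_mult_left, rule integrable_integral, rule ci)
    ultimately show ?thesis by simp
  qed
  have Sc: "((\<lambda>t. c) has_integral c*(b-a)) S" for c unfolding S_def using has_integral_const_real[of c a b] ab by (simp add: mult.commute)
  have g1: "((\<lambda>t. \<bar>f t - \<gamma>\<bar>) has_integral (1 - \<gamma>*(b-a))) S"
  proof -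
    have "((\<lambda>t. f t - \<gamma>) has_integral (1 - \<gamma>*(b-a))) S" by (intro has_integral_diff f1 Sc)
    then show ?thesis by (rule has_integral_eq[rotated]) (use bounds in \<open>auto simp: S_def\<close>)
  qed
  have g2: "((\<lambda>t. \<bar>f t - \<Gamma>\<bar>) has_integral (\<Gamma>*(b-a) - 1)) S"
  proof -
    have "((\<lambda>t. \<Gamma> - f t) has_integral (\<Gamma>*(b-a) - 1)) S" by (intro has_integral_diff f1 Sc)
    then show ?thesis by (rule has_integral_eq[rotated]) (use bounds in \<open>auto simp: S_def\<close>)
  qed
  have r1: "\<bar>D\<bar> \<le> K * (1/(b-a) - \<gamma>)"
  proof -
    have "\<bar>D\<bar> \<le> (1 - \<gamma>*(b-a)) * (K/(b-a))"
      using key[of \<gamma>] g1 by (metis integral_unique has_integral_integrable)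
    also have "\<dots> = K * (1/(b-a) - \<gamma>)" using ab by (simp add: field_simps)
    finally show ?thesis .
  qed
  have r2: "\<bar>D\<bar> \<le> K * (\<Gamma> - 1/(b-a))"
  proof -
    have "\<bar>D\<bar> \<le> (\<Gamma>*(b-a) - 1) * (K/(b-a))"
      using key[of \<Gamma>] g2 by (metis integral_unique has_integral_integrable)
    also have "\<dots> = K * (\<Gamma> - 1/(b-a))" using ab by (simp add: field_simps)
    finally show ?thesis .
  qed
  show ?thesis using r1 r2 unfolding D_def K_def y_def E_def by simp
qed

end
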